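(* Let $(X_i,Y_i)_{i\in[n+m]}$ be i.i.d. from a distribution $P_{XY}$ on $\mathcal X\times\mathcal Y$, where $(X_i,Y_i)_{i\in[n]}$ is the calibration sample and $(X_{n+i})_{i\in[m]}$ the test covariates. Let $C^\mu$ and $D^\mu$ be the estimated-probability rules described in the context, and assume that for every $x\in\mathcal X$ and all $0\le\mu_1<\mu_2$ we have $C^{\mu_1}(x)\subseteq C^{\mu_2}(x)$. Define $$\mu_\alpha=\min\left\{\mu\ge 0:\ \frac{\frac{1}{n+1}\left(\sum_{i=1}^n \mathbb 1\{Y_i\notin C^{\mu}(X_i)\}D^{\mu}(X_i)+1\right)}{\frac{1}{m}\left(1\vee\sum_{i=1}^m D^{\mu}(X_{n+i})\right)}\le\alpha\right\},$$ with $\mu_\alpha=\infty$ and $D^\infty\equiv 0$ if no such $\mu$ exists. Then $$\mathbb E\left[\frac{\sum_{i=1}^m \mathbb 1\{Y_{n+i}\notin C^{\mu_\alpha}(X_{n+i})\}D^{\mu_\alpha}(X_{n+i})}{1\vee\sum_{i=1}^m D^{\mu_\alpha}(X_{n+i})}\right]\le\alpha.$$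
   Context: Let $\alpha\in(0,1)$. $\mathcal I$ is a finite collection of subsets of $\mathcal Y$ (informative prediction sets) enumerated in a fixed lexicographic order, and $w:\mathcal I\to(0,B)$ is a bounded positive weight function. For each $x\in\mathcal X$ and $C\in\mathcal I$, $\hat p_C(x)\in[0,1]$ is a fixed (deterministic, e.g. obtained from independent training data) estimate of $\mathbb P(Y\in C\mid X=x)$. For $\mu\ge0$ define $\hat\ell_{x,C}(\mu)=w(C)\hat p_C(x)+\mu(\hat p_C(x)-(1-\alpha))$. $C^\mu(x)$ is a maximizer of $\hat\ell_{x,C}(\mu)$ over $C\in\mathcal I$, with ties broken in favor of the smallest weight $w(C)$ and then the smallest index in the fixed ordering; $D^\mu(x)=\mathbb 1\{\max_{C\in\mathcal I}\hat\ell_{x,C}(\mu)>0\}$. $a\vee b=\max(a,b)$. *)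

theory Defs
  imports "HOL-Probability.Probability"
begin

text \<open>The collection of informative sets is a list Is (the fixed enumeration);
  w is the weight function, p C x is the estimate of P(Y in C | X = x).\<close>

definition lhat :: "('y set \<Rightarrow> real) \<Rightarrow> ('y set \<Rightarrow> 'x \<Rightarrow> real) \<Rightarrow> real \<Rightarrow> 'x \<Rightarrow> 'y set \<Rightarrow> real \<Rightarrow> real" where
  "lhat w p alpha x C mu = w C * p C x + mu * (p C x - (1 - alpha))"

definition Cmu :: "'y set list \<Rightarrow> ('y set \<Rightarrow> real) \<Rightarrow> ('y set \<Rightarrow> 'x \<Rightarrow> real) \<Rightarrow> real \<Rightarrow> real \<Rightarrow> 'x \<Rightarrow> 'y set" where
  "Cmu Is w p alpha mu x =
     (let L = (\<lambda>k. lhat w p alpha x (Is ! k) mu);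
          Mx = Max (L ` {..<length Is});
          K = {k. k < length Is \<and> L k = Mx};
          wmin = Min ((\<lambda>k. w (Is ! k)) ` K);
          k0 = Min {k \<in> K. w (Is ! k) = wmin}
      in Is ! k0)"

definition Dmu :: "'y set list \<Rightarrow> ('y set \<Rightarrow> real) \<Rightarrow> ('y set \<Rightarrow> 'x \<Rightarrow> real) \<Rightarrow> real \<Rightarrow> real \<Rightarrow> 'x \<Rightarrow> real" where
  "Dmu Is w p alpha mu x =
     of_bool (Max ((\<lambda>C. lhat w p alpha x C mu) ` set Is) > 0)"

text \<open>Sample z : indices 0..<n are calibration, n..<n+m are test points.\<close>
definition calib_ratio ::
  "'y set list \<Rightarrow> ('y set \<Rightarrow> real) \<Rightarrow> ('y set \<Rightarrow> 'x \<Rightarrow> real) \<Rightarrow> real \<Rightarrow> nat \<Rightarrow> nat \<Rightarrow> (nat \<Rightarrow> 'x \<times> 'y) \<Rightarrow> real \<Rightarrow> real" where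
  "calib_ratio Is w p alpha n m z mu =
     ((1 / real (n + 1)) *
        ((\<Sum>i<n. of_bool (snd (z i) \<notin> Cmu Is w p alpha mu (fst (z i))) * Dmu Is w p alpha mu (fst (z i))) + 1))
     / ((1 / real m) * max 1 (\<Sum>i\<in>{n..<n+m}. Dmu Is w p alpha mu (fst (z i))))"

definition mu_set ::
  "'y set list \<Rightarrow> ('y set \<Rightarrow> real) \<Rightarrow> ('y set \<Rightarrow> 'x \<Rightarrow> real) \<Rightarrow> real \<Rightarrow> nat \<Rightarrow> nat \<Rightarrow> (nat \<Rightarrow> 'x \<times> 'y) \<Rightarrow> real set" where
  "mu_set Is w p alpha n m z = {mu. 0 \<le> mu \<and> calib_ratio Is w p alpha n m z mu \<le> alpha}"

definition fdp_at ::
  "'y set list \<Rightarrow> ('y set \<Rightarrow> real) \<Rightarrow> ('y set \<Rightarrow> 'x \<Rightarrow> real) \<Rightarrow> real \<Rightarrow> nat \<Rightarrow> nat \<Rightarrow> (nat \<Rightarrow> 'x \<times> 'y) \<Rightarrow> real \<Rightarrow> real" where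
  "fdp_at Is w p alpha n m z mu =
     (\<Sum>i\<in>{n..<n+m}. of_bool (snd (z i) \<notin> Cmu Is w p alpha mu (fst (z i))) * Dmu Is w p alpha mu (fst (z i)))
     / max 1 (\<Sum>i\<in>{n..<n+m}. Dmu Is w p alpha mu (fst (z i)))"

text \<open>FDP at mu_alpha = inf of mu_set (the paper's min); if mu_set is empty,
  mu_alpha = infinity and D = 0, so the FDP is 0.\<close>
definition fdp_mu_alpha ::
  "'y set list \<Rightarrow> ('y set \<Rightarrow> real) \<Rightarrow> ('y set \<Rightarrow> 'x \<Rightarrow> real) \<Rightarrow> real \<Rightarrow> nat \<Rightarrow> nat \<Rightarrow> (nat \<Rightarrow> 'x \<times> 'y) \<Rightarrow> real" where
  "fdp_mu_alpha Is w p alpha n m z =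
     (if mu_set Is w p alpha n m z = {} then 0
      else fdp_at Is w p alpha n m z (Inf (mu_set Is w p alpha n m z)))"

end

theory Submission
  imports Defs
begin


definition Lk :: "'y set list \<Rightarrow> ('y set \<Rightarrow> real) \<Rightarrow> ('y set \<Rightarrow> 'x \<Rightarrow> real) \<Rightarrow> real \<Rightarrow> 'x \<Rightarrow> real \<Rightarrow> nat \<Rightarrow> real" where
  "Lk Is w p alpha x mu k = lhat w p alpha x (Is ! k) mu"

definition Aset :: "'y set list \<Rightarrow> ('y set \<Rightarrow> real) \<Rightarrow> ('y set \<Rightarrow> 'x \<Rightarrow> real) \<Rightarrow> real \<Rightarrow> 'x \<Rightarrow> real \<Rightarrow> nat set" where
  "Aset Is w p alpha x mu = {k. k < length Is \<and> (\<forall>j<length Is. Lk Is w p alpha x mu j \<le> Lk Is w p alpha x mu k)}"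

definition selk :: "'y set list \<Rightarrow> ('y set \<Rightarrow> real) \<Rightarrow> nat set \<Rightarrow> nat" where
  "selk Is w A = Min {k\<in>A. w (Is!k) = Min ((\<lambda>k. w (Is!k)) ` A)}"

lemma Cmu_alt:
  assumes "Is \<noteq> []"
  shows "Cmu Is w p alpha mu x = Is ! selk Is w (Aset Is w p alpha x mu)"
proof -
  let ?L = "\<lambda>k. lhat w p alpha x (Is ! k) mu"
  have fin: "finite (?L ` {..<length Is})" by simp
  have ne: "?L ` {..<length Is} \<noteq> {}" using assms by force
  have "{k. k < length Is \<and> ?L k = Max (?L ` {..<length Is})} = Aset Is w p alpha x mu"
  proof (intro set_eqI iffI)
    fix k assume k: "k \<in> {k. k < length Is \<and> ?L k = Max (?L ` {..<length Is})}"
    then show "k \<in> Aset Is w p alpha x mu"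
      unfolding Aset_def Lk_def using Max_ge[OF fin] by fastforce
  next
    fix k assume k: "k \<in> Aset Is w p alpha x mu"
    then have "?L k = Max (?L ` {..<length Is})"
      unfolding Aset_def Lk_def by (intro Max_eqI[symmetric]) auto
    then show "k \<in> {k. k < length Is \<and> ?L k = Max (?L ` {..<length Is})}"
      using k unfolding Aset_def by auto
  qed
  then show ?thesis unfolding Cmu_def Let_def selk_def by simp
qed

lemma Aset_ne:
  assumes "Is \<noteq> []"
  shows "Aset Is w p alpha x mu \<noteq> {}"
proof -
  let ?L = "\<lambda>k. Lk Is w p alpha x mu k"
  have fin: "finite (?L ` {..<length Is})" by simp
  have ne: "?L ` {..<length Is} \<noteq> {}" using assms by force
  obtain k where "k < length Is" "?L k = Max (?L ` {..<length Is})"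
    using Max_in[OF fin ne] by auto
  then have "k \<in> Aset Is w p alpha x mu" unfolding Aset_def using Max_ge[OF fin] by auto
  then show ?thesis by auto
qed

lemma Aset_sub: "Aset Is w p alpha x mu \<subseteq> {..<length Is}"
  unfolding Aset_def by auto

lemma argmin_eq:
  fixes f :: "nat \<Rightarrow> real"
  assumes "finite A0" "Ap \<subseteq> A0" "Ap \<noteq> {}" "\<And>k k'. k \<in> A0 \<Longrightarrow> k \<notin> Ap \<Longrightarrow> k' \<in> Ap \<Longrightarrow> f k' < f k"
  shows "{k\<in>A0. f k = Min (f ` A0)} = {k\<in>Ap. f k = Min (f ` Ap)}"
proof -
  have finp: "finite Ap" using assms finite_subset by blast
  have "Min (f ` A0) = Min (f ` Ap)"
  proof (rule antisym)
    show "Min (f ` A0) \<le> Min (f ` Ap)"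
      using assms finp by (intro Min_antimono) auto
    obtain k where k: "k \<in> A0" "f k = Min (f ` A0)"
      using Min_in[of "f ` A0"] assms by fastforce
    obtain k' where k': "k' \<in> Ap" using assms by auto
    show "Min (f ` Ap) \<le> Min (f ` A0)"
    proof (cases "k \<in> Ap")
      case True then show ?thesis using k finp by (metis Min_le finite_imageI image_eqI)
    next
      case False
      have "f k' < f k" using assms(4)[OF k(1) False k'] .
      moreover have "Min (f ` Ap) \<le> f k'" using k' finp by simp
      ultimately show ?thesis using k by linarith
    qed
  qed
  moreover have "k \<in> Ap" if "k \<in> A0" "f k = Min (f ` Ap)" for k
  proof (rule ccontr)
    assume "k \<notin> Ap"
    obtain k' where k': "k' \<in> Ap" using assms by auto
    have "f k' < f k" using assms(4)[OF that(1) \<open>k \<notin> Ap\<close> k'] .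
    moreover have "Min (f ` Ap) \<le> f k'" using k' finp by simp
    ultimately show False using that by simp
  qed
  ultimately show ?thesis using assms by auto
qed




definition rlc :: "(real \<Rightarrow> 'a) \<Rightarrow> real \<Rightarrow> bool" where
  "rlc f mu \<longleftrightarrow> (\<exists>d>0. \<forall>t. mu \<le> t \<and> t < mu + d \<longrightarrow> f t = f mu)"

lemma Lk_lin: "Lk Is w p alpha x t k = w (Is!k) * p (Is!k) x + t * (p (Is!k) x - (1 - alpha))"
  unfolding Lk_def lhat_def by simp

lemma Cmu_rlc:
  assumes ne: "Is \<noteq> []" and wpos: "\<forall>C\<in>set Is. 0 < w C" and ppos: "\<forall>C\<in>set Is. 0 \<le> p C x"
    and mu0: "0 \<le> mu0"
  shows "rlc (\<lambda>t. Cmu Is w p alpha t x) mu0"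
proof -
  define len where "len = length Is"
  define L where "L t k = Lk Is w p alpha x t k" for t k
  define b where "b k = p (Is!k) x - (1 - alpha)" for k
  have Lb: "L t k = L mu0 k + (t - mu0) * b k" for t k
    unfolding L_def Lk_lin b_def by (simp add: algebra_simps)
  define A0 where "A0 = Aset Is w p alpha x mu0"
  have A0ne: "A0 \<noteq> {}" unfolding A0_def using Aset_ne[OF ne] .
  have A0sub: "A0 \<subseteq> {..<len}" unfolding A0_def len_def by (rule Aset_sub)
  have A0fin: "finite A0" using A0sub finite_subset by blast
  have A0mem: "k \<in> A0 \<longleftrightarrow> k < len \<and> (\<forall>j<len. L mu0 j \<le> L mu0 k)" for k
    unfolding A0_def Aset_def L_def len_def by simp
  define bmax where "bmax = Max (b ` A0)"
  define Ap where "Ap = {k\<in>A0. b k = bmax}"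
  have Apsub: "Ap \<subseteq> A0" unfolding Ap_def by auto
  have Apne: "Ap \<noteq> {}"
  proof -
    have "bmax \<in> b ` A0" unfolding bmax_def using A0fin A0ne by (intro Max_in) auto
    then show ?thesis unfolding Ap_def by auto
  qed
  obtain k0 where k0: "k0 \<in> Ap" using Apne by auto
  have k0A: "k0 \<in> A0" "b k0 = bmax" using k0 unfolding Ap_def by auto
  have ble: "k \<in> A0 \<Longrightarrow> b k \<le> bmax" for k unfolding bmax_def using A0fin by simp
  have A0eq: "k \<in> A0 \<Longrightarrow> k' \<in> A0 \<Longrightarrow> L mu0 k = L mu0 k'" for k k'
    using A0mem by (meson antisym)
  have gap: "j < len \<Longrightarrow> j \<notin> A0 \<Longrightarrow> L mu0 j < L mu0 k0" for j
  proof -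
    assume j: "j < len" "j \<notin> A0"
    then obtain i where i: "i < len" "\<not> L mu0 i \<le> L mu0 j" using A0mem by auto
    have "L mu0 i \<le> L mu0 k0" using A0mem k0A(1) i(1) by auto
    then show ?thesis using i by linarith
  qed
  define G where "G = {j. j < len \<and> j \<notin> A0}"
  have Gfin: "finite G" unfolding G_def by auto
  define gd where "gd j = (L mu0 k0 - L mu0 j) / (\<bar>b j - bmax\<bar> + 1)" for j
  define d where "d = Min (insert 1 (gd ` G))"
  have dpos: "0 < d" unfolding d_def using Gfin
  proof (subst Min_gr_iff)
    show "\<forall>a\<in>insert 1 (gd ` G). 0 < a"
      using gap unfolding gd_def G_def by (auto intro!: divide_pos_pos)
  qed auto
  have dle: "j \<in> G \<Longrightarrow> d \<le> gd j" for j unfolding d_def using Gfin by simp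
  have key1: "L t j < L t k0" if t: "mu0 < t" "t < mu0 + d" and j: "j < len" "j \<notin> Ap" for t j
  proof (cases "j \<in> A0")
    case True
    then have "b j < bmax" using ble j unfolding Ap_def by force
    moreover have "L mu0 j = L mu0 k0" using A0eq True k0A by blast
    ultimately show ?thesis using Lb[of t j] Lb[of t k0] k0A t
      by (simp add: mult_strict_left_mono)
  next
    case False
    then have jG: "j \<in> G" unfolding G_def using j by auto
    define g where "g = L mu0 k0 - L mu0 j"
    have gpos: "0 < g" unfolding g_def using gap[OF j(1) False] by simp
    have "t - mu0 < gd j" using dle[OF jG] t by linarith
    then have "(t - mu0) * (\<bar>b j - bmax\<bar> + 1) < g"
      unfolding gd_def g_def by (simp add: pos_less_divide_eq add_pos_nonneg)
    moreover have "(t - mu0) * (b j - bmax) \<le> (t - mu0) * (\<bar>b j - bmax\<bar> + 1)"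
      using t by (intro mult_left_mono) auto
    ultimately have "(t - mu0) * (b j - bmax) < g" by linarith
    then show ?thesis using Lb[of t j] Lb[of t k0] k0A unfolding g_def
      by (simp add: algebra_simps)
  qed
  have key2: "L t j = L t k0" if "j \<in> Ap" for t j
  proof -
    have "L mu0 j = L mu0 k0" using A0eq that Apsub k0A by blast
    moreover have "b j = b k0" using that k0A unfolding Ap_def by simp
    ultimately show ?thesis using Lb[of t j] Lb[of t k0] by simp
  qed
  have Apl: "Ap \<subseteq> {..<len}" using Apsub A0sub by auto
  have Aset_t: "Aset Is w p alpha x t = Ap" if t: "mu0 < t" "t < mu0 + d" for t
  proof (intro set_eqI iffI)
    fix k assume k: "k \<in> Aset Is w p alpha x t"
    then have kl: "k < len" and kmax: "\<forall>j<len. L t j \<le> L t k"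
      unfolding Aset_def L_def len_def by auto
    show "k \<in> Ap"
    proof (rule ccontr)
      assume "k \<notin> Ap"
      then have "L t k < L t k0" using key1[OF t kl] by simp
      moreover have "L t k0 \<le> L t k" using kmax Apl k0 by auto
      ultimately show False by simp
    qed
  next
    fix k assume k: "k \<in> Ap"
    have "L t j \<le> L t k" if "j < len" for j
      using key1[OF t that] key2[of j t] key2[OF k, of t] by (cases "j \<in> Ap") auto
    then show "k \<in> Aset Is w p alpha x t"
      using k Apl unfolding Aset_def L_def len_def by auto
  qed
  have wdom: "w (Is!k') < w (Is!k)" if k: "k \<in> A0" "k \<notin> Ap" and k': "k' \<in> Ap" for k k'
  proof -
    have k'A: "k' \<in> A0" "b k' = bmax" using k' unfolding Ap_def by auto
    have kl: "k < len" "k' < len" using k(1) k'A(1) A0sub by auto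
    have inset: "Is!k \<in> set Is" "Is!k' \<in> set Is" using kl unfolding len_def by auto
    define pk where "pk = p (Is!k) x"
    define pk' where "pk' = p (Is!k') x"
    define wk where "wk = w (Is!k)"
    define wk' where "wk' = w (Is!k')"
    have wkp: "0 < wk" "0 < wk'" using wpos inset unfolding wk_def wk'_def by auto
    have pkp: "0 \<le> pk" using ppos inset unfolding pk_def by auto
    have "b k < bmax" using ble k unfolding Ap_def by force
    then have pl: "pk < pk'" using k'A unfolding b_def pk_def pk'_def by simp
    have "L mu0 k = L mu0 k'" using A0eq k(1) k'A(1) by blast
    then have eq: "pk * (wk + mu0) = pk' * (wk' + mu0)"
      unfolding L_def Lk_lin pk_def pk'_def wk_def wk'_def by (simp add: algebra_simps)
    have "pk * (wk + mu0) < pk' * (wk + mu0)"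
      using pl wkp mu0 by (intro mult_strict_right_mono) auto
    then have "pk' * (wk' + mu0) < pk' * (wk + mu0)" using eq by simp
    moreover have "0 < pk'" using pl pkp by simp
    ultimately have "wk' + mu0 < wk + mu0" by simp
    then show ?thesis unfolding wk_def wk'_def by simp
  qed
  have selq: "selk Is w A0 = selk Is w Ap"
    unfolding selk_def using argmin_eq[of A0 Ap "\<lambda>k. w (Is!k)"] A0fin Apsub Apne wdom by simp
  show ?thesis unfolding rlc_def
  proof (intro exI[of _ d] conjI allI impI)
    show "0 < d" by (rule dpos)
    fix t assume t: "mu0 \<le> t \<and> t < mu0 + d"
    show "Cmu Is w p alpha t x = Cmu Is w p alpha mu0 x"
    proof (cases "t = mu0")
      case False
      then have "mu0 < t" using t by simp
      then show ?thesis using Aset_t[of t] t selq unfolding Cmu_alt[OF ne] A0_def by simp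
    qed simp
  qed
qed

lemma Dmu_alt:
  assumes ne: "Is \<noteq> []"
  shows "Dmu Is w p alpha mu x = of_bool (\<exists>C\<in>set Is. 0 < lhat w p alpha x C mu)"
  unfolding Dmu_def using ne by (subst Max_gr_iff) auto

lemma lhat_pos_mono:
  assumes wpos: "\<forall>C\<in>set Is. 0 < w C" and ppos: "\<forall>C\<in>set Is. 0 \<le> p C x"
    and al: "alpha < 1" and mu: "0 \<le> mu1" "mu1 \<le> mu2"
    and pos: "\<exists>C\<in>set Is. 0 < lhat w p alpha x C mu2"
  shows "\<exists>C\<in>set Is. 0 < lhat w p alpha x C mu1"
proof -
  obtain C where C: "C \<in> set Is" "0 < lhat w p alpha x C mu2" using pos by auto
  have w: "0 < w C" and pp: "0 \<le> p C x" using C wpos ppos by auto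
  show ?thesis
  proof (cases "p C x - (1 - alpha) \<ge> 0")
    case True
    then have "0 < p C x" using al by simp
    then have "0 < w C * p C x" using w by simp
    moreover have "0 \<le> mu1 * (p C x - (1 - alpha))" using True mu by simp
    ultimately have "0 < lhat w p alpha x C mu1" unfolding lhat_def by linarith
    then show ?thesis using C(1) by blast
  next
    case False
    then have "mu2 * (p C x - (1 - alpha)) \<le> mu1 * (p C x - (1 - alpha))"
      using mu by (intro mult_right_mono_neg) auto
    then have "0 < lhat w p alpha x C mu1" using C(2) unfolding lhat_def by linarith
    then show ?thesis using C(1) by blast
  qed
qed

lemma Dmu_mono:
  assumes ne: "Is \<noteq> []" and wpos: "\<forall>C\<in>set Is. 0 < w C" and ppos: "\<forall>C\<in>set Is. 0 \<le> p C x"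
    and al: "alpha < 1" and mu: "0 \<le> mu1" "mu1 \<le> mu2"
  shows "Dmu Is w p alpha mu2 x \<le> Dmu Is w p alpha mu1 x"
  using lhat_pos_mono[where Is=Is and w=w and p=p and x=x and alpha=alpha, OF wpos ppos al mu(1) mu(2)] unfolding Dmu_alt[OF ne] by auto

lemma Dmu_rlc:
  assumes ne: "Is \<noteq> []" and wpos: "\<forall>C\<in>set Is. 0 < w C" and ppos: "\<forall>C\<in>set Is. 0 \<le> p C x"
    and al: "alpha < 1" and mu0: "0 \<le> mu0"
  shows "rlc (\<lambda>t. Dmu Is w p alpha t x) mu0"
proof (cases "\<exists>C\<in>set Is. 0 < lhat w p alpha x C mu0")
  case True
  then obtain C where C: "C \<in> set Is" "0 < lhat w p alpha x C mu0" by auto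
  define l0 where "l0 = lhat w p alpha x C mu0"
  define bC where "bC = p C x - (1 - alpha)"
  have lt: "lhat w p alpha x C t = l0 + (t - mu0) * bC" for t
    unfolding l0_def bC_def lhat_def by (simp add: algebra_simps)
  define d where "d = l0 / (\<bar>bC\<bar> + 1)"
  have dpos: "0 < d" unfolding d_def l0_def using C by (simp add: add_pos_nonneg)
  show ?thesis unfolding rlc_def
  proof (intro exI[of _ d] conjI allI impI dpos)
    fix t assume t: "mu0 \<le> t \<and> t < mu0 + d"
    have c: "0 < \<bar>bC\<bar> + 1" by simp
    have "t - mu0 < l0 / (\<bar>bC\<bar> + 1)" using t unfolding d_def by linarith
    then have "(t - mu0) * (\<bar>bC\<bar> + 1) < l0" by (metis c pos_less_divide_eq)
    moreover have "(t - mu0) * (- bC) \<le> (t - mu0) * (\<bar>bC\<bar> + 1)"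
      using t by (intro mult_left_mono) auto
    ultimately have "0 < lhat w p alpha x C t" unfolding lt by linarith
    then show "Dmu Is w p alpha t x = Dmu Is w p alpha mu0 x"
      unfolding Dmu_alt[OF ne] using True C by auto
  qed
next
  case False
  show ?thesis unfolding rlc_def
  proof (intro exI[of _ 1] conjI allI impI)
    show "(0::real) < 1" by simp
  next
    fix t assume t: "mu0 \<le> t \<and> t < mu0 + 1"
    then have "\<not> (\<exists>C\<in>set Is. 0 < lhat w p alpha x C t)"
      using False lhat_pos_mono[of Is w p x alpha mu0 t] wpos ppos al mu0 by blast
    then show "Dmu Is w p alpha t x = Dmu Is w p alpha mu0 x"
      unfolding Dmu_alt[OF ne] using False by auto
  qed
qed



lemma rlc_const: "rlc (\<lambda>t. c) mu" unfolding rlc_def by (intro exI[of _ 1]) auto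

lemma rlc_comp: assumes "rlc f mu" shows "rlc (\<lambda>t. g (f t)) mu"
proof -
  obtain d1 where d1: "d1 > 0" "\<And>t. mu \<le> t \<and> t < mu + d1 \<Longrightarrow> f t = f mu" using assms unfolding rlc_def by blast
  have "\<forall>t. mu \<le> t \<and> t < mu + d1 \<longrightarrow> g (f t) = g (f mu)"
  proof (intro allI impI)
    fix t assume "mu \<le> t \<and> t < mu + d1"
    from d1(2)[OF this] show "g (f t) = g (f mu)" by (rule arg_cong)
  qed
  then show ?thesis unfolding rlc_def using d1(1) by blast
qed

lemma rlc_pair: assumes "rlc f mu" "rlc g mu" shows "rlc (\<lambda>t. h (f t) (g t)) mu"
proof -
  obtain d1 where d1: "d1 > 0" "\<And>t. mu \<le> t \<and> t < mu + d1 \<Longrightarrow> f t = f mu" using assms(1) unfolding rlc_def by blast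
  obtain d2 where d2: "d2 > 0" "\<And>t. mu \<le> t \<and> t < mu + d2 \<Longrightarrow> g t = g mu" using assms(2) unfolding rlc_def by blast
  have "\<forall>t. mu \<le> t \<and> t < mu + min d1 d2 \<longrightarrow> h (f t) (g t) = h (f mu) (g mu)"
  proof (intro allI impI)
    fix t assume t: "mu \<le> t \<and> t < mu + min d1 d2"
    have "mu \<le> t \<and> t < mu + d1" using t min.cobounded1[of d1 d2] by linarith
    then have a: "f t = f mu" by (rule d1(2))
    have "mu \<le> t \<and> t < mu + d2" using t min.cobounded2[of d1 d2] by linarith
    then have b: "g t = g mu" by (rule d2(2))
    show "h (f t) (g t) = h (f mu) (g mu)" unfolding a b ..
  qed
  moreover have "min d1 d2 > 0" using d1 d2 by simp
  ultimately show ?thesis unfolding rlc_def by blast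
qed

lemma rlc_sum: "finite F \<Longrightarrow> (\<forall>i\<in>F. rlc (f i) mu) \<Longrightarrow> rlc (\<lambda>t. \<Sum>i\<in>F. f i t) mu"
proof (induction F rule: finite_induct)
  case empty then show ?case by (simp add: rlc_const)
next
  case (insert a F)
  then have "rlc (\<lambda>t. f a t + (\<Sum>i\<in>F. f i t)) mu"
    by (intro rlc_pair[where h="(+)"]) auto
  then show ?case using insert by simp
qed

lemma rlc_ge0: "0 \<le> mu \<Longrightarrow> rlc (\<lambda>t. 0 \<le> (t::real)) mu"
  unfolding rlc_def by (intro exI[of _ 1]) auto

lemma inf_attained:
  fixes S :: "real set"
  assumes "S \<subseteq> {0..}" "S \<noteq> {}" "\<And>mu. 0 \<le> mu \<Longrightarrow> rlc (\<lambda>t. t \<in> S) mu"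
  shows "Inf S \<in> S"
proof -
  have bdd: "bdd_below S" using assms(1) by (auto intro: bdd_belowI[of _ 0])
  have i0: "0 \<le> Inf S" using assms(1,2) by (intro cInf_greatest) auto
  obtain d where d: "d > 0" "\<forall>t. Inf S \<le> t \<and> t < Inf S + d \<longrightarrow> (t \<in> S) = (Inf S \<in> S)"
    using assms(3)[OF i0] unfolding rlc_def by auto
  obtain s where s: "s \<in> S" "s < Inf S + d" using cInf_lessD[OF assms(2), of "Inf S + d"] d by auto
  have "Inf S \<le> s" using cInf_lower[OF s(1) bdd] .
  then have "(s \<in> S) = (Inf S \<in> S)" using d(2) s(2) by blast
  then show ?thesis using s(1) by blast
qed

definition eC :: "'y set list \<Rightarrow> ('y set \<Rightarrow> real) \<Rightarrow> ('y set \<Rightarrow> 'x \<Rightarrow> real) \<Rightarrow> real \<Rightarrow> 'x \<Rightarrow> 'y \<Rightarrow> real \<Rightarrow> real" where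
  "eC Is w p alpha x y mu = of_bool (y \<notin> Cmu Is w p alpha mu x) * Dmu Is w p alpha mu x"

locale fdr =
  fixes Is :: "'y set list" and w :: "'y set \<Rightarrow> real" and p :: "'y set \<Rightarrow> 'x \<Rightarrow> real"
    and alpha :: real and n m :: nat
  assumes ne: "Is \<noteq> []" and wpos: "\<forall>C\<in>set Is. 0 < w C" and ppos: "\<forall>C\<in>set Is. \<forall>x. 0 \<le> p C x"
    and al0: "0 < alpha" and al1: "alpha < 1" and m1: "1 \<le> m"
    and nest: "\<And>x mu1 mu2. 0 \<le> mu1 \<Longrightarrow> mu1 < mu2 \<Longrightarrow> Cmu Is w p alpha mu1 x \<subseteq> Cmu Is w p alpha mu2 x"
begin

definition e :: "(nat \<Rightarrow> 'x \<times> 'y) \<Rightarrow> nat \<Rightarrow> real \<Rightarrow> real" where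
  "e z i mu = eC Is w p alpha (fst (z i)) (snd (z i)) mu"
definition d :: "(nat \<Rightarrow> 'x \<times> 'y) \<Rightarrow> nat \<Rightarrow> real \<Rightarrow> real" where
  "d z i mu = Dmu Is w p alpha mu (fst (z i))"

abbreviation "T \<equiv> {n..<n+m}"

definition Sj :: "(nat \<Rightarrow> 'x \<times> 'y) \<Rightarrow> nat \<Rightarrow> real set" where
  "Sj z j = {mu. 0 \<le> mu \<and> real m * (\<Sum>k\<in>insert j {..<n}. e z k mu)
                 \<le> alpha * real (n+1) * (1 + (\<Sum>k\<in>T - {j}. d z k mu))}"

definition H :: "(nat \<Rightarrow> 'x \<times> 'y) \<Rightarrow> nat \<Rightarrow> nat \<Rightarrow> real" where
  "H z j i = (if Sj z j = {} then 0 else e z i (Inf (Sj z j)) / (\<Sum>k\<in>insert j {..<n}. e z k (Inf (Sj z j))))"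

lemma ppos': "\<forall>C\<in>set Is. 0 \<le> p C x" using ppos by auto

lemma e01: "e z i mu = 0 \<or> e z i mu = 1"
  unfolding e_def eC_def Dmu_def by auto
lemma d01: "d z i mu = 0 \<or> d z i mu = 1"
  unfolding d_def Dmu_def by auto
lemma e_nn: "0 \<le> e z i mu" using e01[of z i mu] by auto
lemma d_nn: "0 \<le> d z i mu" using d01[of z i mu] by auto
lemma e_le_d: "e z i mu \<le> d z i mu"
  unfolding e_def d_def eC_def Dmu_def by auto
lemma d_le1: "d z i mu \<le> 1" using d01[of z i mu] by auto

lemma e_mono: assumes "0 \<le> mu1" "mu1 \<le> mu2" shows "e z i mu2 \<le> e z i mu1"
proof -
  have D: "Dmu Is w p alpha mu2 x \<le> Dmu Is w p alpha mu1 x" for x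
    using Dmu_mono[where p=p and x=x, OF ne wpos ppos'[of x] al1 assms] .
  have C: "y \<notin> Cmu Is w p alpha mu2 x \<Longrightarrow> y \<notin> Cmu Is w p alpha mu1 x" for x y
    using nest[OF assms(1), of mu2 x] assms by (cases "mu1 = mu2") auto
  show ?thesis unfolding e_def eC_def using D[of "fst (z i)"] C[of "snd (z i)" "fst (z i)"]
    unfolding Dmu_def by auto
qed

lemma e_rlc: "0 \<le> mu \<Longrightarrow> rlc (e z i) mu"
proof -
  assume mu: "0 \<le> mu"
  have "rlc (\<lambda>t. eC Is w p alpha (fst (z i)) (snd (z i)) t) mu"
    unfolding eC_def
    by (rule rlc_pair[OF Cmu_rlc[where p=p and x="fst (z i)", OF ne wpos ppos'[of "fst (z i)"] mu] Dmu_rlc[where p=p and x="fst (z i)", OF ne wpos ppos'[of "fst (z i)"] al1 mu]])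
  then show ?thesis unfolding e_def by simp
qed

lemma d_rlc: "0 \<le> mu \<Longrightarrow> rlc (d z i) mu"
proof -
  assume mu: "0 \<le> mu"
  show ?thesis unfolding d_def using Dmu_rlc[where p=p and x="fst (z i)", OF ne wpos ppos'[of "fst (z i)"] al1 mu] by simp
qed

lemma calib_le:
  "calib_ratio Is w p alpha n m z mu \<le> alpha \<longleftrightarrow>
     real m * ((\<Sum>i<n. e z i mu) + 1) \<le> alpha * real (n+1) * max 1 (\<Sum>i\<in>T. d z i mu)"
proof -
  define A where "A = (\<Sum>i<n. e z i mu) + 1"
  define D where "D = max 1 (\<Sum>i\<in>T. d z i mu)"
  have D1: "1 \<le> D" unfolding D_def by simp
  have mpos: "0 < real m" using m1 by simp
  have "calib_ratio Is w p alpha n m z mu = (A / real (n+1)) / (D / real m)"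
    unfolding calib_ratio_def A_def D_def e_def d_def eC_def by simp
  also have "\<dots> = (A * real m) / (real (n+1) * D)" using D1 mpos by (simp add: field_simps)
  finally have eq: "calib_ratio Is w p alpha n m z mu = (A * real m) / (real (n+1) * D)" .
  have pos: "0 < real (n+1) * D" using D1 by simp
  have "(A * real m) / (real (n+1) * D) \<le> alpha \<longleftrightarrow> A * real m \<le> alpha * (real (n+1) * D)"
    using pos_divide_le_eq[OF pos] by simp
  also have "\<dots> \<longleftrightarrow> real m * A \<le> alpha * real (n+1) * D" by (simp add: mult_ac)
  finally show ?thesis unfolding eq A_def D_def .
qed

lemma mu_set_rlc: "0 \<le> mu \<Longrightarrow> rlc (\<lambda>t. t \<in> mu_set Is w p alpha n m z) mu"
proof -
  assume mu: "0 \<le> mu"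
  have r1: "rlc (\<lambda>t. \<Sum>i<n. e z i t) mu" using e_rlc[OF mu] by (intro rlc_sum) auto
  have r2: "rlc (\<lambda>t. \<Sum>i\<in>T. d z i t) mu" using d_rlc[OF mu] by (intro rlc_sum) auto
  have r3: "rlc (\<lambda>t. ((\<Sum>i<n. e z i t), (\<Sum>i\<in>T. d z i t))) mu"
    by (rule rlc_pair[OF r1 r2])
  have r4: "rlc (\<lambda>t. (0 \<le> t, ((\<Sum>i<n. e z i t), (\<Sum>i\<in>T. d z i t)))) mu"
    by (rule rlc_pair[OF rlc_ge0[OF mu] r3])
  have "rlc (\<lambda>t. (\<lambda>(b, a, c). b \<and> real m * (a + 1) \<le> alpha * real (n+1) * max 1 c)
            (0 \<le> t, ((\<Sum>i<n. e z i t), (\<Sum>i\<in>T. d z i t)))) mu"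
    by (rule rlc_comp[OF r4])
  then show ?thesis unfolding mu_set_def calib_le by simp
qed

lemma Sj_rlc: "0 \<le> mu \<Longrightarrow> rlc (\<lambda>t. t \<in> Sj z j) mu"
proof -
  assume mu: "0 \<le> mu"
  have r1: "rlc (\<lambda>t. \<Sum>i\<in>insert j {..<n}. e z i t) mu" using e_rlc[OF mu] by (intro rlc_sum) auto
  have r2: "rlc (\<lambda>t. \<Sum>i\<in>T - {j}. d z i t) mu" using d_rlc[OF mu] by (intro rlc_sum) auto
  have r3: "rlc (\<lambda>t. ((\<Sum>i\<in>insert j {..<n}. e z i t), (\<Sum>i\<in>T - {j}. d z i t))) mu"
    by (rule rlc_pair[OF r1 r2])
  have r4: "rlc (\<lambda>t. (0 \<le> t, ((\<Sum>i\<in>insert j {..<n}. e z i t), (\<Sum>i\<in>T - {j}. d z i t)))) mu"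
    by (rule rlc_pair[OF rlc_ge0[OF mu] r3])
  have "rlc (\<lambda>t. (\<lambda>(b, a, c). b \<and> real m * a \<le> alpha * real (n+1) * (1 + c))
            (0 \<le> t, ((\<Sum>i\<in>insert j {..<n}. e z i t), (\<Sum>i\<in>T - {j}. d z i t)))) mu"
    by (rule rlc_comp[OF r4])
  then show ?thesis unfolding Sj_def by simp
qed

lemma sum_ins: "j \<in> T \<Longrightarrow> (\<Sum>k\<in>insert j {..<n}. f k) = f j + (\<Sum>k<n. f k)"
  by (subst sum.insert) auto

lemma sum_T: "j \<in> T \<Longrightarrow> (\<Sum>k\<in>T. f k) = f j + (\<Sum>k\<in>T - {j}. f k)"
  by (subst sum.remove[of T j]) auto

lemma mu_set_sub_Sj: assumes j: "j \<in> T" shows "mu_set Is w p alpha n m z \<subseteq> Sj z j"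
proof
  fix mu assume mu: "mu \<in> mu_set Is w p alpha n m z"
  then have mu0: "0 \<le> mu" and c: "real m * ((\<Sum>i<n. e z i mu) + 1) \<le> alpha * real (n+1) * max 1 (\<Sum>i\<in>T. d z i mu)"
    unfolding mu_set_def calib_le by auto
  have "max 1 (\<Sum>i\<in>T. d z i mu) \<le> 1 + (\<Sum>k\<in>T - {j}. d z k mu)"
    using sum_T[OF j, of "\<lambda>k. d z k mu"] d_le1[of z j mu] sum_nonneg[of "T - {j}" "\<lambda>k. d z k mu"] d_nn
    by auto
  then have "alpha * real (n+1) * max 1 (\<Sum>i\<in>T. d z i mu) \<le> alpha * real (n+1) * (1 + (\<Sum>k\<in>T - {j}. d z k mu))"
    using al0 by (intro mult_left_mono) auto
  moreover have "real m * (\<Sum>k\<in>insert j {..<n}. e z k mu) \<le> real m * ((\<Sum>i<n. e z i mu) + 1)"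
    using sum_ins[OF j, of "\<lambda>k. e z k mu"] e01[of z j mu] by (intro mult_left_mono) auto
  ultimately show "mu \<in> Sj z j" unfolding Sj_def using c mu0 by auto
qed

lemma H_nn: "0 \<le> H z j i"
  unfolding H_def using e_nn by (auto intro!: divide_nonneg_nonneg sum_nonneg)

lemma pointwise:
  "fdp_mu_alpha Is w p alpha n m z \<le> alpha * real (n+1) / real m * (\<Sum>j\<in>T. H z j j)"
proof (cases "mu_set Is w p alpha n m z = {}")
  case True
  have "0 \<le> alpha * real (n+1) / real m * (\<Sum>j\<in>T. H z j j)"
    using H_nn al0 by (intro mult_nonneg_nonneg divide_nonneg_nonneg sum_nonneg) auto
  then show ?thesis unfolding fdp_mu_alpha_def using True by simp
next
  case False
  define S where "S = mu_set Is w p alpha n m z"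
  define u where "u = Inf S"
  have S0: "S \<subseteq> {0..}" unfolding S_def mu_set_def by auto
  have uS: "u \<in> S" unfolding u_def
    using inf_attained[OF S0] False mu_set_rlc unfolding S_def by blast
  have bddS: "bdd_below S" using S0 by (auto intro: bdd_belowI[of _ 0])
  have u0: "0 \<le> u" using uS S0 by auto
  define Ec where "Ec = (\<Sum>i<n. e z i u)"
  define Db where "Db = max 1 (\<Sum>i\<in>T. d z i u)"
  have Db1: "1 \<le> Db" unfolding Db_def by simp
  have Ec0: "0 \<le> Ec" unfolding Ec_def using e_nn by (auto intro: sum_nonneg)
  have hk: "real m * (Ec + 1) \<le> alpha * real (n+1) * Db"
    using uS unfolding S_def mu_set_def calib_le Ec_def Db_def by auto
  have mpos: "0 < real m" using m1 by simp
  have "fdp_mu_alpha Is w p alpha n m z = (\<Sum>j\<in>T. e z j u) / Db"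
    using False unfolding fdp_mu_alpha_def fdp_at_def S_def[symmetric] u_def[symmetric] Db_def e_def d_def eC_def
    by simp
  then have fdp: "fdp_mu_alpha Is w p alpha n m z = (\<Sum>j\<in>T. e z j u / Db)"
    by (simp add: sum_divide_distrib)
  have tm: "e z j u / Db \<le> alpha * real (n+1) / real m * H z j j" if j: "j \<in> T" for j
  proof (cases "e z j u = 0")
    case True
    then show ?thesis using H_nn al0 mpos by (auto intro!: mult_nonneg_nonneg)
  next
    case False
    then have e1: "e z j u = 1" using e01 by blast
    define Sj' where "Sj' = Sj z j"
    have uSj: "u \<in> Sj'" using mu_set_sub_Sj[OF j] uS unfolding S_def Sj'_def by auto
    have Sj0: "Sj' \<subseteq> {0..}" unfolding Sj'_def Sj_def by auto
    have bddSj: "bdd_below Sj'" using Sj0 by (auto intro: bdd_belowI[of _ 0])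
    have "Inf Sj' \<le> u" using cInf_lower[OF uSj bddSj] .
    moreover have "u \<le> Inf Sj'"
    proof (rule cInf_greatest)
      show "Sj' \<noteq> {}" using uSj by auto
      fix mu assume mu: "mu \<in> Sj'"
      show "u \<le> mu"
      proof (rule ccontr)
        assume "\<not> u \<le> mu"
        then have lt: "mu < u" by simp
        have mu0: "0 \<le> mu" using mu Sj0 by auto
        have ej: "e z j mu = 1" using e_mono[OF mu0, of u z j] lt e1 e01[of z j mu] by auto
        have dj: "d z j mu = 1" using e_le_d[of z j mu] ej d01[of z j mu] by auto
        have c: "real m * (\<Sum>k\<in>insert j {..<n}. e z k mu) \<le> alpha * real (n+1) * (1 + (\<Sum>k\<in>T - {j}. d z k mu))"
          using mu unfolding Sj'_def Sj_def by auto
        have "(\<Sum>i\<in>T. d z i mu) = 1 + (\<Sum>k\<in>T - {j}. d z k mu)"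
          using sum_T[OF j, of "\<lambda>k. d z k mu"] dj by simp
        moreover have "0 \<le> (\<Sum>k\<in>T - {j}. d z k mu)" using d_nn by (auto intro: sum_nonneg)
        ultimately have "max 1 (\<Sum>i\<in>T. d z i mu) = 1 + (\<Sum>k\<in>T - {j}. d z k mu)" by simp
        then have "mu \<in> S" unfolding S_def mu_set_def calib_le
          using c mu0 sum_ins[OF j, of "\<lambda>k. e z k mu"] ej by (simp add: add.commute)
        then have "u \<le> mu" unfolding u_def using cInf_lower[OF _ bddS] by blast
        then show False using lt by simp
      qed
    qed
    ultimately have Iu: "Inf Sj' = u" by simp
    have "Sj z j \<noteq> {}" using uSj unfolding Sj'_def by auto
    then have "H z j j = e z j u / (\<Sum>k\<in>insert j {..<n}. e z k u)"
      unfolding H_def using Iu unfolding Sj'_def by simp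
    also have "\<dots> = 1 / (Ec + 1)" using sum_ins[OF j, of "\<lambda>k. e z k u"] e1 unfolding Ec_def
      by (simp add: add.commute)
    finally have "H z j j = 1 / (Ec + 1)" .
    moreover have "1 / Db \<le> alpha * real (n+1) / real m * (1 / (Ec + 1))"
    proof -
      have "alpha * real (n+1) / real m * (1 / (Ec + 1)) = alpha * real (n+1) / (real m * (Ec + 1))"
        by simp
      moreover have "1 / Db \<le> alpha * real (n+1) / (real m * (Ec + 1))"
      proof -
        have Y: "0 < real m * (Ec + 1)" using mpos Ec0 by simp
        have "real m * (Ec + 1) / Db \<le> alpha * real (n+1)"
          using hk Db1 pos_divide_le_eq[of Db "real m * (Ec + 1)" "alpha * real (n+1)"] by simp
        then have "1 / Db * (real m * (Ec + 1)) \<le> alpha * real (n+1)" by simp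
        then show ?thesis using pos_le_divide_eq[OF Y] by simp
      qed
      ultimately show ?thesis by simp
    qed
    ultimately show ?thesis using e1 by simp
  qed
  have "(\<Sum>j\<in>T. e z j u / Db) \<le> (\<Sum>j\<in>T. alpha * real (n+1) / real m * H z j j)"
    by (intro sum_mono tm) auto
  then show ?thesis unfolding fdp by (simp add: sum_distrib_left)
qed

end




lemma selk_char:
  assumes "finite A" "A \<noteq> {}"
  shows "selk Is w A = k \<longleftrightarrow> (k \<in> A \<and> (\<forall>j\<in>A. w (Is!k) \<le> w (Is!j)) \<and> (\<forall>j\<in>A. w (Is!j) \<le> w (Is!k) \<longrightarrow> k \<le> j))"
proof -
  define W where "W = Min ((\<lambda>k. w (Is!k)) ` A)"
  define B where "B = {k\<in>A. w (Is!k) = W}"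
  have Wle: "j \<in> A \<Longrightarrow> W \<le> w (Is!j)" for j unfolding W_def using assms by simp
  have WA: "W \<in> (\<lambda>k. w (Is!k)) ` A" unfolding W_def using assms by (intro Min_in) auto
  have Bfin: "finite B" unfolding B_def using assms by simp
  have Bne: "B \<noteq> {}" unfolding B_def using WA by auto
  have sel: "selk Is w A = Min B" unfolding selk_def B_def W_def by simp
  show ?thesis
  proof
    assume k: "selk Is w A = k"
    then have kB: "k \<in> B" using sel Min_in[OF Bfin Bne] by simp
    then have kA: "k \<in> A" and wk: "w (Is!k) = W" unfolding B_def by auto
    have "\<forall>j\<in>A. w (Is!j) \<le> w (Is!k) \<longrightarrow> k \<le> j"
    proof (intro ballI impI)
      fix j assume j: "j \<in> A" "w (Is!j) \<le> w (Is!k)"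
      then have "j \<in> B" using Wle[OF j(1)] wk unfolding B_def by auto
      then have "Min B \<le> j" using Bfin by simp
      then show "k \<le> j" using k sel by simp
    qed
    then show "k \<in> A \<and> (\<forall>j\<in>A. w (Is!k) \<le> w (Is!j)) \<and> (\<forall>j\<in>A. w (Is!j) \<le> w (Is!k) \<longrightarrow> k \<le> j)"
      using kA wk Wle by auto
  next
    assume k: "k \<in> A \<and> (\<forall>j\<in>A. w (Is!k) \<le> w (Is!j)) \<and> (\<forall>j\<in>A. w (Is!j) \<le> w (Is!k) \<longrightarrow> k \<le> j)"
    obtain k1 where k1: "k1 \<in> A" "W = w (Is!k1)" using WA by blast
    have "w (Is!k) \<le> w (Is!k1)" using k k1(1) by blast
    moreover have "W \<le> w (Is!k)" using Wle k by blast
    ultimately have wkW: "w (Is!k) = W" using k1(2) by linarith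
    then have kB: "k \<in> B" unfolding B_def using k by blast
    have "\<forall>j\<in>B. k \<le> j"
    proof
      fix j assume j: "j \<in> B"
      then have "j \<in> A" "w (Is!j) = W" unfolding B_def by auto
      then show "k \<le> j" using k wkW by auto
    qed
    then have "Min B = k" using kB Bfin by (intro Min_eqI) auto
    then show "selk Is w A = k" using sel by simp
  qed
qed

locale fdrp = fdr Is w p alpha n m
  for Is :: "'y set list" and w :: "'y set \<Rightarrow> real" and p :: "'y set \<Rightarrow> 'x \<Rightarrow> real"
    and alpha :: real and n m :: nat +
  fixes M :: "('x \<times> 'y) measure"
  assumes PM: "prob_space M"
    and pmeas: "\<And>C. C \<in> set Is \<Longrightarrow> (\<lambda>z. p C (fst z)) \<in> borel_measurable M"
    and smeas: "\<And>C. C \<in> set Is \<Longrightarrow> {z \<in> space M. snd z \<in> C} \<in> sets M"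
begin

definition pI :: "nat \<Rightarrow> 'x \<Rightarrow> real" where "pI k x = (if k < length Is then p (Is!k) x else 0)"
definition memI :: "nat \<Rightarrow> 'y \<Rightarrow> bool" where "memI k y = (k < length Is \<and> y \<in> Is!k)"
definition LI :: "'x \<Rightarrow> real \<Rightarrow> nat \<Rightarrow> real" where
  "LI x mu k = w (Is!k) * pI k x + mu * (pI k x - (1 - alpha))"
definition InA :: "'x \<Rightarrow> real \<Rightarrow> nat \<Rightarrow> bool" where
  "InA x mu k = (\<forall>i\<in>{..<length Is}. LI x mu i \<le> LI x mu k)"

lemma pI_meas: assumes g: "g \<in> N \<rightarrow>\<^sub>M M" shows "(\<lambda>z. pI k (fst (g z))) \<in> borel_measurable N"
proof (cases "k < length Is")
  case True
  then have "Is!k \<in> set Is" by simp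
  from measurable_compose[OF g pmeas[OF this]] True show ?thesis unfolding pI_def by simp
qed (simp add: pI_def)

lemma memI_meas: assumes g: "g \<in> N \<rightarrow>\<^sub>M M" shows "Measurable.pred N (\<lambda>z. memI k (snd (g z)))"
proof (cases "k < length Is")
  case True
  then have "Is!k \<in> set Is" by simp
  then have "Measurable.pred M (\<lambda>z. snd z \<in> Is!k)" using smeas unfolding pred_def by blast
  from measurable_compose[OF g this] True show ?thesis unfolding memI_def by simp
qed (simp add: memI_def)

lemma Lk_LI: "k < length Is \<Longrightarrow> Lk Is w p alpha x mu k = LI x mu k"
  unfolding Lk_lin LI_def pI_def by simp

lemma Aset_InA: "k \<in> Aset Is w p alpha x mu \<longleftrightarrow> k < length Is \<and> InA x mu k"
  unfolding Aset_def InA_def using Lk_LI by auto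

lemma Dmu_eq: "Dmu Is w p alpha mu x = of_bool (\<exists>k\<in>{..<length Is}. 0 < LI x mu k)"
proof -
  have "(\<exists>C\<in>set Is. 0 < lhat w p alpha x C mu) \<longleftrightarrow> (\<exists>k<length Is. 0 < lhat w p alpha x (Is!k) mu)"
    by (metis in_set_conv_nth)
  also have "\<dots> \<longleftrightarrow> (\<exists>k\<in>{..<length Is}. 0 < LI x mu k)"
    using Lk_LI[of _ x mu] unfolding Lk_def by auto
  finally have "(\<exists>C\<in>set Is. 0 < lhat w p alpha x C mu) \<longleftrightarrow> (\<exists>k\<in>{..<length Is}. 0 < LI x mu k)" .
  then show ?thesis unfolding Dmu_alt[OF ne] by simp
qed

lemma notC_eq: "(y \<notin> Cmu Is w p alpha mu x) \<longleftrightarrow>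
   (\<exists>k\<in>{..<length Is}. (InA x mu k \<and> (\<forall>j\<in>{..<length Is}. InA x mu j \<longrightarrow> w (Is!k) \<le> w (Is!j))
       \<and> (\<forall>j\<in>{..<length Is}. InA x mu j \<and> w (Is!j) \<le> w (Is!k) \<longrightarrow> k \<le> j)) \<and> \<not> memI k y)"
proof -
  define A where "A = Aset Is w p alpha x mu"
  have Afin: "finite A" unfolding A_def by (rule finite_subset[OF Aset_sub]) simp
  have Ane: "A \<noteq> {}" unfolding A_def using Aset_ne[OF ne] .
  have Asub: "A \<subseteq> {..<length Is}" unfolding A_def by (rule Aset_sub)
  have selA: "selk Is w A \<in> A" using selk_char[where Is=Is and w=w and k="selk Is w A", OF Afin Ane] by simp
  have memA: "j \<in> A \<longleftrightarrow> j < length Is \<and> InA x mu j" for j unfolding A_def by (rule Aset_InA)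
  have sl: "selk Is w A < length Is" using selA Asub by auto
  have "(y \<notin> Cmu Is w p alpha mu x) \<longleftrightarrow> \<not> memI (selk Is w A) y"
    unfolding Cmu_alt[OF ne] A_def[symmetric] memI_def using sl by simp
  also have "\<dots> \<longleftrightarrow> (\<exists>k\<in>{..<length Is}. selk Is w A = k \<and> \<not> memI k y)"
    using sl by auto
  also have "\<dots> \<longleftrightarrow> (\<exists>k\<in>{..<length Is}. (InA x mu k \<and> (\<forall>j\<in>{..<length Is}. InA x mu j \<longrightarrow> w (Is!k) \<le> w (Is!j))
       \<and> (\<forall>j\<in>{..<length Is}. InA x mu j \<and> w (Is!j) \<le> w (Is!k) \<longrightarrow> k \<le> j)) \<and> \<not> memI k y)"
  proof (rule bex_cong[OF refl])
    fix k assume k: "k \<in> {..<length Is}"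
    have "selk Is w A = k \<longleftrightarrow> (InA x mu k \<and> (\<forall>j\<in>{..<length Is}. InA x mu j \<longrightarrow> w (Is!k) \<le> w (Is!j))
       \<and> (\<forall>j\<in>{..<length Is}. InA x mu j \<and> w (Is!j) \<le> w (Is!k) \<longrightarrow> k \<le> j))"
    proof -
      have kA: "k \<in> A \<longleftrightarrow> InA x mu k" using memA k by simp
      have b1: "(\<forall>j\<in>A. w (Is!k) \<le> w (Is!j)) \<longleftrightarrow> (\<forall>j\<in>{..<length Is}. InA x mu j \<longrightarrow> w (Is!k) \<le> w (Is!j))"
        by (auto simp: memA)
      have b2: "(\<forall>j\<in>A. w (Is!j) \<le> w (Is!k) \<longrightarrow> k \<le> j) \<longleftrightarrow> (\<forall>j\<in>{..<length Is}. InA x mu j \<and> w (Is!j) \<le> w (Is!k) \<longrightarrow> k \<le> j)"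
        by (auto simp: memA)
      show ?thesis unfolding selk_char[OF Afin Ane] kA b1 b2 ..
    qed
    then show "(selk Is w A = k \<and> \<not> memI k y) \<longleftrightarrow> ((InA x mu k \<and> (\<forall>j\<in>{..<length Is}. InA x mu j \<longrightarrow> w (Is!k) \<le> w (Is!j))
       \<and> (\<forall>j\<in>{..<length Is}. InA x mu j \<and> w (Is!j) \<le> w (Is!k) \<longrightarrow> k \<le> j)) \<and> \<not> memI k y)"
      by blast
  qed
  finally show ?thesis .
qed

lemma Dmu_meas:
  assumes f[measurable]: "f \<in> borel_measurable N" and g: "g \<in> N \<rightarrow>\<^sub>M M"
  shows "(\<lambda>z. Dmu Is w p alpha (f z) (fst (g z))) \<in> borel_measurable N"
proof -
  note [measurable] = pI_meas[OF g]
  show ?thesis unfolding Dmu_eq LI_def by measurable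
qed

lemma notC_meas:
  assumes f[measurable]: "f \<in> borel_measurable N" and g: "g \<in> N \<rightarrow>\<^sub>M M"
  shows "(\<lambda>z. of_bool (snd (g z) \<notin> Cmu Is w p alpha (f z) (fst (g z))) :: real) \<in> borel_measurable N"
proof -
  note [measurable] = pI_meas[OF g] memI_meas[OF g]
  show ?thesis unfolding notC_eq InA_def LI_def by measurable
qed

lemma eC_meas:
  assumes f: "f \<in> borel_measurable N" and g: "g \<in> N \<rightarrow>\<^sub>M M"
  shows "(\<lambda>z. eC Is w p alpha (fst (g z)) (snd (g z)) (f z)) \<in> borel_measurable N"
  unfolding eC_def using notC_meas[OF f g] Dmu_meas[OF f g] by (rule borel_measurable_times)

end




lemma rlc_rat:
  fixes S :: "real set"
  assumes "0 \<le> s" "s \<in> S" "rlc (\<lambda>t. t \<in> S) s" "s < a"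
  shows "\<exists>q::rat. real_of_rat q < a \<and> real_of_rat q \<in> S"
proof -
  obtain d where d: "d > 0" "\<forall>t. s \<le> t \<and> t < s + d \<longrightarrow> (t \<in> S) = (s \<in> S)"
    using assms(3) unfolding rlc_def by blast
  have "s < min (s + d) a" using d assms by simp
  then obtain r where r: "r \<in> \<rat>" "s < r" "r < min (s + d) a" using Rats_dense_in_real by blast
  then obtain q where q: "r = real_of_rat q" by (auto elim: Rats_cases)
  have "r \<in> S" using d(2) r assms(2) by auto
  then show ?thesis using q r by auto
qed

lemma inf_meas:
  fixes S :: "'a \<Rightarrow> real set"
  assumes predS: "\<And>q. Measurable.pred N (\<lambda>z. q \<in> S z)" and S0: "\<And>z. S z \<subseteq> {0..}"
    and rl: "\<And>z mu. 0 \<le> mu \<Longrightarrow> rlc (\<lambda>t. t \<in> S z) mu"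
  shows "Measurable.pred N (\<lambda>z. S z = {})" "(\<lambda>z. Inf (S z)) \<in> borel_measurable N"
proof -
  have ne_iff': "S z \<noteq> {} \<longleftrightarrow> (\<exists>q::rat. real_of_rat q \<in> S z)" for z
  proof
    assume "\<exists>q::rat. real_of_rat q \<in> S z" then show "S z \<noteq> {}" by auto
  next
    assume "S z \<noteq> {}"
    then obtain s where s: "s \<in> S z" by auto
    have s0: "0 \<le> s" using s S0 by auto
    show "\<exists>q::rat. real_of_rat q \<in> S z" using rlc_rat[OF s0 s rl[OF s0], of "s + 1"] by auto
  qed
  have ne_iff: "S z = {} \<longleftrightarrow> \<not> (\<exists>q::rat. real_of_rat q \<in> S z)" for z
    using ne_iff'[of z] by blast
  note [measurable] = predS
  show P1[measurable]: "Measurable.pred N (\<lambda>z. S z = {})" unfolding ne_iff by measurable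
  have lt_iff: "Inf (S z) < a \<longleftrightarrow> (S z = {} \<and> Inf ({}::real set) < a) \<or> (\<exists>q::rat. real_of_rat q < a \<and> real_of_rat q \<in> S z)" for z a
  proof (cases "S z = {}")
    case True then show ?thesis by simp
  next
    case False
    have bdd: "bdd_below (S z)" using S0[of z] by (auto intro: bdd_belowI[of _ 0])
    show ?thesis
    proof
      assume "Inf (S z) < a"
      then obtain s where s: "s \<in> S z" "s < a" using cInf_lessD[OF False] by blast
      have s0: "0 \<le> s" using s S0 by auto
      show "(S z = {} \<and> Inf ({}::real set) < a) \<or> (\<exists>q::rat. real_of_rat q < a \<and> real_of_rat q \<in> S z)"
        using rlc_rat[OF s0 s(1) rl[OF s0] s(2)] by blast
    next
      assume "(S z = {} \<and> Inf ({}::real set) < a) \<or> (\<exists>q::rat. real_of_rat q < a \<and> real_of_rat q \<in> S z)"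
      then obtain q where q: "real_of_rat q < a" "real_of_rat q \<in> S z" using False by blast
      have "Inf (S z) \<le> real_of_rat q" using cInf_lower[OF q(2) bdd] .
      then show "Inf (S z) < a" using q(1) by simp
    qed
  qed
  show "(\<lambda>z. Inf (S z)) \<in> borel_measurable N"
    unfolding borel_measurable_iff_less
  proof
    fix a
    have "{z \<in> space N. Inf (S z) < a} = {z \<in> space N. (S z = {} \<and> Inf ({}::real set) < a) \<or> (\<exists>q::rat. real_of_rat q < a \<and> real_of_rat q \<in> S z)}"
      using lt_iff by blast
    also have "\<dots> \<in> sets N" by measurable
    finally show "{z \<in> space N. Inf (S z) < a} \<in> sets N" .
  qed
qed




definition tr :: "nat \<Rightarrow> nat \<Rightarrow> nat \<Rightarrow> nat" where
  "tr i j k = (if k = i then j else if k = j then i else k)"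

lemma tr_tr[simp]: "tr i j (tr i j k) = k" unfolding tr_def by auto

lemma tr_bij: assumes "i \<in> A" "j \<in> A" shows "bij_betw (tr i j) A A"
  by (rule bij_betwI[where g="tr i j"]) (use assms in \<open>auto simp: tr_def\<close>)

context fdrp begin

abbreviation PP where "PP \<equiv> PiM {..<n+m} (\<lambda>_. M)"

lemma comp_meas: "i < n+m \<Longrightarrow> (\<lambda>z. z i) \<in> PP \<rightarrow>\<^sub>M M"
  by (rule measurable_component_singleton) simp

lemma e_meas: "f \<in> borel_measurable PP \<Longrightarrow> i < n+m \<Longrightarrow> (\<lambda>z. e z i (f z)) \<in> borel_measurable PP"
  unfolding e_def by (rule eC_meas[OF _ comp_meas])

lemma d_meas: "f \<in> borel_measurable PP \<Longrightarrow> i < n+m \<Longrightarrow> (\<lambda>z. d z i (f z)) \<in> borel_measurable PP"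
  unfolding d_def by (rule Dmu_meas[OF _ comp_meas])

lemma sumE_meas: "f \<in> borel_measurable PP \<Longrightarrow> j \<in> T \<Longrightarrow> (\<lambda>z. \<Sum>k\<in>insert j {..<n}. e z k (f z)) \<in> borel_measurable PP"
  by (rule borel_measurable_sum) (rule e_meas; auto)

lemma sumD_meas: "f \<in> borel_measurable PP \<Longrightarrow> j \<in> T \<Longrightarrow> (\<lambda>z. \<Sum>k\<in>T - {j}. d z k (f z)) \<in> borel_measurable PP"
  by (rule borel_measurable_sum) (rule d_meas; auto)

lemma Sj_pred: assumes j: "j \<in> T" shows "Measurable.pred PP (\<lambda>z. q \<in> Sj z j)"
proof -
  have s1: "(\<lambda>z. \<Sum>k\<in>insert j {..<n}. e z k q) \<in> borel_measurable PP"
    using sumE_meas[of "\<lambda>z. q", OF _ j] by simp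
  have s2: "(\<lambda>z. \<Sum>k\<in>T - {j}. d z k q) \<in> borel_measurable PP"
    using sumD_meas[of "\<lambda>z. q", OF _ j] by simp
  have f1: "(\<lambda>z. real m * (\<Sum>k\<in>insert j {..<n}. e z k q)) \<in> borel_measurable PP"
    by (rule borel_measurable_times[OF borel_measurable_const s1])
  have f2: "(\<lambda>z. alpha * real (n+1) * (1 + (\<Sum>k\<in>T - {j}. d z k q))) \<in> borel_measurable PP"
    by (rule borel_measurable_times[OF borel_measurable_const borel_measurable_add[OF borel_measurable_const s2]])
  have "{z \<in> space PP. q \<in> Sj z j} = (if 0 \<le> q then {z \<in> space PP. real m * (\<Sum>k\<in>insert j {..<n}. e z k q)
          \<le> alpha * real (n+1) * (1 + (\<Sum>k\<in>T - {j}. d z k q))} else {})"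
    unfolding Sj_def by auto
  also have "\<dots> \<in> sets PP" using borel_measurable_le[OF f1 f2] by simp
  finally show ?thesis unfolding pred_def .
qed

lemma Sj_meas:
  assumes j: "j \<in> T"
  shows "Measurable.pred PP (\<lambda>z. Sj z j = {})" "(\<lambda>z. Inf (Sj z j)) \<in> borel_measurable PP"
  using inf_meas[where N=PP and S="\<lambda>z. Sj z j", OF Sj_pred[OF j] _ Sj_rlc] unfolding Sj_def by auto

lemma H_meas:
  assumes j: "j \<in> T" and i: "i \<in> insert j {..<n}"
  shows "(\<lambda>z. H z j i) \<in> borel_measurable PP"
proof -
  have il: "i < n+m" using i j by auto
  have g: "(\<lambda>z. e z i (Inf (Sj z j)) / (\<Sum>k\<in>insert j {..<n}. e z k (Inf (Sj z j)))) \<in> borel_measurable PP"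
    by (rule borel_measurable_divide[OF e_meas[OF Sj_meas(2)[OF j] il] sumE_meas[OF Sj_meas(2)[OF j] j]])
  show ?thesis unfolding H_def by (rule measurable_If[OF borel_measurable_const g Sj_meas(1)[OF j, unfolded pred_def]])
qed

definition RR :: "nat \<Rightarrow> nat \<Rightarrow> (nat \<Rightarrow> 'x \<times> 'y) \<Rightarrow> (nat \<Rightarrow> 'x \<times> 'y)" where
  "RR i j z = (\<lambda>k\<in>{..<n+m}. z (tr i j k))"

lemma R_meas: assumes "i < n+m" "j < n+m" shows "RR i j \<in> PP \<rightarrow>\<^sub>M PP"
  unfolding RR_def
  by (rule measurable_restrict) (rule measurable_component_singleton, use assms in \<open>auto simp: tr_def\<close>)

lemma distr_R: assumes "i < n+m" "j < n+m" shows "distr PP PP (RR i j) = PP"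
proof -
  have "inj_on (tr i j) {..<n+m}" by (rule bij_betw_imp_inj_on[OF tr_bij]) (use assms in auto)
  moreover have "tr i j \<in> {..<n+m} \<rightarrow> {..<n+m}" using assms by (auto simp: tr_def)
  ultimately show ?thesis
    using distr_PiM_reindex[of "{..<n+m}" "\<lambda>_. M" "tr i j" "{..<n+m}"] PM
    unfolding RR_def by simp
qed

lemma H_swap:
  assumes j: "j \<in> T" and i: "i \<in> insert j {..<n}"
  shows "H (RR i j z) j j = H z j i"
proof -
  define z' where "z' = RR i j z"
  have z'k: "k < n+m \<Longrightarrow> z' k = z (tr i j k)" for k unfolding z'_def RR_def by simp
  have ek: "k < n+m \<Longrightarrow> e z' k mu = e z (tr i j k) mu" for k mu unfolding e_def using z'k by simp
  have dk: "k < n+m \<Longrightarrow> d z' k mu = d z (tr i j k) mu" for k mu unfolding d_def using z'k by simp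
  have bij: "bij_betw (tr i j) (insert j {..<n}) (insert j {..<n})" by (rule tr_bij) (use i in auto)
  have sE: "(\<Sum>k\<in>insert j {..<n}. e z' k mu) = (\<Sum>k\<in>insert j {..<n}. e z k mu)" for mu
  proof -
    have "(\<Sum>k\<in>insert j {..<n}. e z' k mu) = (\<Sum>k\<in>insert j {..<n}. e z (tr i j k) mu)"
      using j by (intro sum.cong refl ek) auto
    also have "\<dots> = (\<Sum>k\<in>insert j {..<n}. e z k mu)"
      by (rule sum.reindex_bij_betw[OF bij])
    finally show ?thesis .
  qed
  have sD: "(\<Sum>k\<in>T - {j}. d z' k mu) = (\<Sum>k\<in>T - {j}. d z k mu)" for mu
  proof (intro sum.cong refl)
    fix k assume k: "k \<in> T - {j}"
    then have "tr i j k = k" using i unfolding tr_def by auto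
    then show "d z' k mu = d z k mu" using dk[of k mu] k by simp
  qed
  have SE: "Sj z' j = Sj z j" unfolding Sj_def sE sD ..
  have ej: "e z' j mu = e z i mu" for mu using ek[of j mu] j by (simp add: tr_def)
  show ?thesis unfolding z'_def[symmetric] H_def SE ej sE ..
qed

lemma int_H:
  assumes j: "j \<in> T" and i: "i \<in> insert j {..<n}"
  shows "(\<integral>\<^sup>+z. ennreal (H z j i) \<partial>PP) = (\<integral>\<^sup>+z. ennreal (H z j j) \<partial>PP)"
proof -
  have il: "i < n+m" "j < n+m" using i j by auto
  have [measurable]: "(\<lambda>z. H z j j) \<in> borel_measurable PP" using H_meas[OF j] by simp
  have "(\<integral>\<^sup>+z. ennreal (H z j j) \<partial>PP) = (\<integral>\<^sup>+z. ennreal (H z j j) \<partial>(distr PP PP (RR i j)))"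
    using distr_R[OF il] by simp
  also have "\<dots> = (\<integral>\<^sup>+z. ennreal (H (RR i j z) j j) \<partial>PP)"
    by (rule nn_integral_distr[OF R_meas[OF il]]) (simp add: distr_R[OF il])
  also have "\<dots> = (\<integral>\<^sup>+z. ennreal (H z j i) \<partial>PP)"
    using H_swap[OF j i] by simp
  finally show ?thesis by simp
qed

lemma sum_H_le1: "(\<Sum>i\<in>insert j {..<n}. H z j i) \<le> 1"
proof (cases "Sj z j = {}")
  case True then show ?thesis unfolding H_def by simp
next
  case False
  define E where "E = (\<Sum>k\<in>insert j {..<n}. e z k (Inf (Sj z j)))"
  have "(\<Sum>i\<in>insert j {..<n}. H z j i) = (\<Sum>i\<in>insert j {..<n}. e z i (Inf (Sj z j)) / E)"
    unfolding H_def E_def using False by simp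
  also have "\<dots> = E / E" unfolding sum_divide_distrib[symmetric] E_def ..
  also have "\<dots> \<le> 1" by (cases "E = 0") simp_all
  finally show ?thesis .
qed

lemma int_Hjj:
  assumes j: "j \<in> T"
  shows "ennreal (real (n+1)) * (\<integral>\<^sup>+z. ennreal (H z j j) \<partial>PP) \<le> 1"
proof -
  have card: "card (insert j {..<n}) = n + 1" using j by simp
  have "ennreal (real (n+1)) * (\<integral>\<^sup>+z. ennreal (H z j j) \<partial>PP)
        = (\<Sum>i\<in>insert j {..<n}. (\<integral>\<^sup>+z. ennreal (H z j j) \<partial>PP))"
  proof -
    have "(\<Sum>i\<in>insert j {..<n}. (\<integral>\<^sup>+z. ennreal (H z j j) \<partial>PP)) = of_nat (n+1) * (\<integral>\<^sup>+z. ennreal (H z j j) \<partial>PP)"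
      using card by simp
    moreover have "(of_nat (n+1) :: ennreal) = ennreal (real (n+1))" by (rule ennreal_of_nat_eq_real_of_nat)
    ultimately show ?thesis by simp
  qed
  also have "\<dots> = (\<Sum>i\<in>insert j {..<n}. (\<integral>\<^sup>+z. ennreal (H z j i) \<partial>PP))"
    by (rule sum.cong[OF refl]) (rule int_H[OF j, symmetric])
  also have "\<dots> = (\<integral>\<^sup>+z. (\<Sum>i\<in>insert j {..<n}. ennreal (H z j i)) \<partial>PP)"
    by (rule nn_integral_sum[symmetric]) (use H_meas[OF j] in simp)
  also have "\<dots> \<le> (\<integral>\<^sup>+z. 1 \<partial>PP)"
  proof (rule nn_integral_mono)
    fix z
    have "(\<Sum>i\<in>insert j {..<n}. ennreal (H z j i)) = ennreal (\<Sum>i\<in>insert j {..<n}. H z j i)"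
      using H_nn by simp
    also have "\<dots> \<le> 1" using sum_H_le1[of z j] by simp
    finally show "(\<Sum>i\<in>insert j {..<n}. ennreal (H z j i)) \<le> 1" .
  qed
  also have "\<dots> = 1"
  proof -
    interpret PS: prob_space PP by (rule prob_space_PiM) (use PM in simp)
    show ?thesis using PS.emeasure_space_1 by simp
  qed
  finally show ?thesis .
qed

end




context fdrp begin

lemma main:
  "(\<integral>\<^sup>+ z. ennreal (fdp_mu_alpha Is w p alpha n m z) \<partial>PP) \<le> ennreal alpha"
proof -
  define a where "a = alpha / real m"
  have a0: "0 \<le> a" unfolding a_def using al0 by simp
  have mpos: "0 < real m" using m1 by simp
  have pw: "ennreal (fdp_mu_alpha Is w p alpha n m z)
            \<le> (\<Sum>j\<in>T. ennreal a * (ennreal (real (n+1)) * ennreal (H z j j)))" for z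
  proof -
    have "fdp_mu_alpha Is w p alpha n m z \<le> alpha * real (n+1) / real m * (\<Sum>j\<in>T. H z j j)"
      by (rule pointwise)
    also have "\<dots> = (\<Sum>j\<in>T. a * (real (n+1) * H z j j))"
      unfolding a_def sum_distrib_left by (intro sum.cong refl) (simp add: field_simps)
    finally have "ennreal (fdp_mu_alpha Is w p alpha n m z) \<le> ennreal (\<Sum>j\<in>T. a * (real (n+1) * H z j j))"
      by (rule ennreal_leI)
    also have "\<dots> = (\<Sum>j\<in>T. ennreal (a * (real (n+1) * H z j j)))"
      using a0 H_nn by (intro sum_ennreal[symmetric]) simp
    also have "\<dots> = (\<Sum>j\<in>T. ennreal a * (ennreal (real (n+1)) * ennreal (H z j j)))"
      using a0 H_nn by (intro sum.cong refl) (simp add: ennreal_mult)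
    finally show ?thesis .
  qed
  have "(\<integral>\<^sup>+ z. ennreal (fdp_mu_alpha Is w p alpha n m z) \<partial>PP)
        \<le> (\<integral>\<^sup>+ z. (\<Sum>j\<in>T. ennreal a * (ennreal (real (n+1)) * ennreal (H z j j))) \<partial>PP)"
    by (rule nn_integral_mono) (rule pw)
  also have "\<dots> = (\<Sum>j\<in>T. (\<integral>\<^sup>+ z. ennreal a * (ennreal (real (n+1)) * ennreal (H z j j)) \<partial>PP))"
  proof (rule nn_integral_sum)
    fix j assume j: "j \<in> T"
    have [measurable]: "(\<lambda>z. H z j j) \<in> borel_measurable PP" using H_meas[OF j] by simp
    show "(\<lambda>z. ennreal a * (ennreal (real (n+1)) * ennreal (H z j j))) \<in> borel_measurable PP"
      by measurable
  qed
  also have "\<dots> = (\<Sum>j\<in>T. ennreal a * (ennreal (real (n+1)) * (\<integral>\<^sup>+ z. ennreal (H z j j) \<partial>PP)))"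
  proof (rule sum.cong[OF refl])
    fix j assume j: "j \<in> T"
    have [measurable]: "(\<lambda>z. H z j j) \<in> borel_measurable PP" using H_meas[OF j] by simp
    have "(\<integral>\<^sup>+ z. ennreal a * (ennreal (real (n+1)) * ennreal (H z j j)) \<partial>PP)
          = ennreal a * (\<integral>\<^sup>+ z. ennreal (real (n+1)) * ennreal (H z j j) \<partial>PP)"
      by (rule nn_integral_cmult) measurable
    also have "(\<integral>\<^sup>+ z. ennreal (real (n+1)) * ennreal (H z j j) \<partial>PP)
          = ennreal (real (n+1)) * (\<integral>\<^sup>+ z. ennreal (H z j j) \<partial>PP)"
      by (rule nn_integral_cmult) measurable
    finally show "(\<integral>\<^sup>+ z. ennreal a * (ennreal (real (n+1)) * ennreal (H z j j)) \<partial>PP)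
          = ennreal a * (ennreal (real (n+1)) * (\<integral>\<^sup>+ z. ennreal (H z j j) \<partial>PP))" .
  qed
  also have "\<dots> \<le> (\<Sum>j\<in>T. ennreal a * 1)"
    by (intro sum_mono mult_left_mono int_Hjj) auto
  also have "\<dots> = ennreal (real m * a)"
    by (simp add: ennreal_of_nat_eq_real_of_nat[symmetric] ennreal_mult' a0)
  also have "real m * a = alpha" unfolding a_def using mpos by simp
  finally show ?thesis .
qed

end



theorem theorem2:
  fixes M :: "('x \<times> 'y) measure"
    and Is :: "'y set list" and w :: "'y set \<Rightarrow> real" and B :: real
    and p :: "'y set \<Rightarrow> 'x \<Rightarrow> real"
    and alpha :: real and n m :: nat
  assumes "prob_space M"
    and "0 < alpha" "alpha < 1"
    and "m \<ge> 1"
    and "Is \<noteq> []" "distinct Is"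
    and "\<And>C. C \<in> set Is \<Longrightarrow> 0 < w C \<and> w C < B"
    and "\<And>C x. C \<in> set Is \<Longrightarrow> 0 \<le> p C x \<and> p C x \<le> 1"
    and "\<And>C. C \<in> set Is \<Longrightarrow> (\<lambda>z. p C (fst z)) \<in> borel_measurable M"
    and "\<And>C. C \<in> set Is \<Longrightarrow> {z \<in> space M. snd z \<in> C} \<in> sets M"
    and "\<And>x mu1 mu2. 0 \<le> mu1 \<Longrightarrow> mu1 < mu2 \<Longrightarrow>
           Cmu Is w p alpha mu1 x \<subseteq> Cmu Is w p alpha mu2 x"
  shows "(\<integral>\<^sup>+ z. ennreal (fdp_mu_alpha Is w p alpha n m z) \<partial>(PiM {..<n+m} (\<lambda>_. M)))
           \<le> ennreal alpha"
proof -
  interpret fdrp Is w p alpha n m M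
  proof (intro fdrp.intro fdr.intro fdrp_axioms.intro)
    show "Is \<noteq> []" using assms(5) .
    show "\<forall>C\<in>set Is. 0 < w C" using assms(7) by blast
    show "\<forall>C\<in>set Is. \<forall>x. 0 \<le> p C x" using assms(8) by blast
    show "0 < alpha" using assms(2) .
    show "alpha < 1" using assms(3) .
    show "1 \<le> m" using assms(4) .
    show "\<And>x mu1 mu2. 0 \<le> mu1 \<Longrightarrow> mu1 < mu2 \<Longrightarrow> Cmu Is w p alpha mu1 x \<subseteq> Cmu Is w p alpha mu2 x"
      by (rule assms(11))
    show "prob_space M" using assms(1) .
    show "\<And>C. C \<in> set Is \<Longrightarrow> (\<lambda>z. p C (fst z)) \<in> borel_measurable M" by (rule assms(9))
    show "\<And>C. C \<in> set Is \<Longrightarrow> {z \<in> space M. snd z \<in> C} \<in> sets M" by (rule assms(10))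
  qed
  show ?thesis by (rule main)
qed

end
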